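(* For any prime $p>3$, $$\binom{\frac12p-1}{p-1}\binom{2p-1}{p-1}\equiv 1-\frac7{12}p^3B_{p-3}\pmod{p^4}.$$
   Context: For rational $x$ and integer $n\ge0$, $\binom{x}{n}=\frac{x(x-1)\cdots(x-n+1)}{n!}$. $B_0,B_1,\dots$ are the Bernoulli numbers. A congruence $a\equiv b\pmod{p^m}$ between rational numbers means that $(a-b)/p^m$ is a rational number whose denominator is not divisible by $p$. *)

theory Defs
  imports Complex_Main "HOL-Computational_Algebra.Primes"
begin

text \<open>Bernoulli numbers B_0, B_1, ... with B_0 = 1 and
  sum_{k=0}^{n} C(n+1,k) B_k = 0 for n \<ge> 1 (so B_1 = -1/2).\<close>
fun bernoulli :: "nat \<Rightarrow> rat" where
  "bernoulli n = (if n = 0 then 1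
     else - (\<Sum>k<n. of_nat ((n + 1) choose k) * bernoulli k) / of_nat (n + 1))"

definition rat_cong_pow :: "rat \<Rightarrow> rat \<Rightarrow> nat \<Rightarrow> nat \<Rightarrow> bool" where
  "rat_cong_pow a b p m \<longleftrightarrow>
     \<not> (int p dvd snd (quotient_of ((a - b) / (of_nat p ^ m))))"

end

theory Submission
  imports Defs "HOL-Number_Theory.Number_Theory"
begin


declare bernoulli.simps[simp del]

definition pint :: "nat \<Rightarrow> rat \<Rightarrow> bool" where
  "pint p x \<longleftrightarrow> (\<exists>a b::int. \<not> int p dvd b \<and> x = of_int a / of_int b)"

lemma pint_int[simp]: "prime p \<Longrightarrow> pint p (of_int a)"
  unfolding pint_def
  by (rule exI[of _ a], rule exI[of _ 1]) (auto simp: prime_gt_1_nat)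

lemma pint_nat[simp]: "prime p \<Longrightarrow> pint p (of_nat a)"
  using pint_int[of p "int a"] by simp

lemma pint_0[simp]: "prime p \<Longrightarrow> pint p 0" using pint_int[of p 0] by simp
lemma pint_1[simp]: "prime p \<Longrightarrow> pint p 1" using pint_int[of p 1] by simp
lemma pint_numeral[simp]: "prime p \<Longrightarrow> pint p (numeral n)" using pint_int[of p "numeral n"] by simp

lemma pint_inv_int: "\<not> int p dvd b \<Longrightarrow> pint p (1 / of_int b)"
  unfolding pint_def by (rule exI[of _ 1], rule exI[of _ b]) auto

lemma pint_inv_nat: "\<not> p dvd b \<Longrightarrow> pint p (1 / of_nat b)"
  using pint_inv_int[of p "int b"] by simp

lemma pint_inv_small: assumes "0 < d" "d < p" shows "pint p (1 / of_nat d)"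
proof -
  have "\<not> p dvd d" using assms by (auto dest: dvd_imp_le)
  thus ?thesis by (rule pint_inv_nat)
qed

lemma pint_inv_num: assumes "numeral k < p" shows "pint p (1 / numeral k)"
  using pint_inv_small[of "numeral k" p] assms by simp

lemma pint_add: assumes "prime p" "pint p x" "pint p y" shows "pint p (x + y)"
proof -
  obtain a b where ab: "\<not> int p dvd b" "x = of_int a / of_int b" using assms(2) pint_def by auto
  obtain c d where cd: "\<not> int p dvd d" "y = of_int c / of_int d" using assms(3) pint_def by auto
  have b0: "b \<noteq> 0" using ab by auto
  have d0: "d \<noteq> 0" using cd by auto
  have pi: "prime (int p)" using assms(1) by simp
  have "\<not> int p dvd b * d" using ab(1) cd(1) prime_dvd_mult_iff[OF pi] by simp
  moreover have "x + y = of_int (a*d + c*b) / of_int (b*d)" using ab cd b0 d0 by (simp add: field_simps)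
  ultimately show ?thesis unfolding pint_def by blast
qed

lemma pint_mult: assumes "prime p" "pint p x" "pint p y" shows "pint p (x * y)"
proof -
  obtain a b where ab: "\<not> int p dvd b" "x = of_int a / of_int b" using assms(2) pint_def by auto
  obtain c d where cd: "\<not> int p dvd d" "y = of_int c / of_int d" using assms(3) pint_def by auto
  have pi: "prime (int p)" using assms(1) by simp
  have "\<not> int p dvd b * d" using ab(1) cd(1) prime_dvd_mult_iff[OF pi] by simp
  moreover have "x * y = of_int (a*c) / of_int (b*d)" using ab cd by (simp add: field_simps)
  ultimately show ?thesis unfolding pint_def by blast
qed

lemma pint_minus: assumes "pint p x" shows "pint p (- x)"
proof -
  obtain a b where ab: "\<not> int p dvd b" "x = of_int a / of_int b" using assms pint_def by auto
  have "- x = of_int (-a) / of_int b" using ab by simp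
  thus ?thesis using ab unfolding pint_def by blast
qed

lemma pint_diff: "prime p \<Longrightarrow> pint p x \<Longrightarrow> pint p y \<Longrightarrow> pint p (x - y)"
  using pint_add[of p x "-y"] pint_minus[of p y] by simp

lemma pint_sum: "prime p \<Longrightarrow> (\<And>i. i \<in> A \<Longrightarrow> pint p (f i)) \<Longrightarrow> pint p (\<Sum>i\<in>A. f i)"
  by (induction A rule: infinite_finite_induct) (auto intro: pint_add)

lemma pint_prod: "prime p \<Longrightarrow> (\<And>i. i \<in> A \<Longrightarrow> pint p (f i)) \<Longrightarrow> pint p (\<Prod>i\<in>A. f i)"
  by (induction A rule: infinite_finite_induct) (auto intro: pint_mult)

lemma pint_power: "prime p \<Longrightarrow> pint p x \<Longrightarrow> pint p (x ^ n)"
  by (induction n) (auto intro: pint_mult)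

lemma pint_div_int: "prime p \<Longrightarrow> pint p x \<Longrightarrow> \<not> int p dvd b \<Longrightarrow> pint p (x / of_int b)"
  using pint_mult[of p x "1 / of_int b"] pint_inv_int[of p b] by simp

lemma pint_div_nat: "prime p \<Longrightarrow> pint p x \<Longrightarrow> \<not> p dvd b \<Longrightarrow> pint p (x / of_nat b)"
  using pint_div_int[of p x "int b"] by simp

lemma pint_denom:
  assumes "prime p" "pint p x" shows "\<not> int p dvd snd (quotient_of x)"
proof -
  obtain a b where ab: "\<not> int p dvd b" "x = of_int a / of_int b" using assms(2) pint_def by auto
  obtain c d where q: "quotient_of x = (c, d)" by (cases "quotient_of x")
  have d0: "d > 0" using q quotient_of_denom_pos by blast
  have cop: "coprime c d" using q quotient_of_coprime by blast
  have b0: "b \<noteq> 0" using ab by auto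
  have "of_int a / of_int b = (of_int c / of_int d :: rat)" using ab q quotient_of_div by metis
  hence "of_int (a * d) = (of_int (c * b) :: rat)" using b0 d0 by (simp add: field_simps)
  hence e: "a * d = c * b" by linarith
  hence "d dvd c * b" by (metis dvd_triv_right)
  hence "d dvd b" using cop by (simp add: coprime_commute coprime_dvd_mult_right_iff)
  hence "\<not> int p dvd d" using ab(1) dvd_trans by blast
  thus ?thesis using q by simp
qed

definition inI :: "nat \<Rightarrow> nat \<Rightarrow> rat \<Rightarrow> bool" where
  "inI p m x \<longleftrightarrow> (\<exists>y. pint p y \<and> x = of_nat p ^ m * y)"

lemma inI_0: "inI p 0 x \<longleftrightarrow> pint p x" unfolding inI_def by auto

lemma inI_add: assumes "prime p" "inI p m x" "inI p m y" shows "inI p m (x + y)"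
proof -
  obtain a where a: "pint p a" "x = of_nat p ^ m * a" using assms(2) inI_def by auto
  obtain b where b: "pint p b" "y = of_nat p ^ m * b" using assms(3) inI_def by auto
  have "x + y = of_nat p ^ m * (a + b)" using a b by (simp add: distrib_left)
  thus ?thesis unfolding inI_def using pint_add[OF assms(1) a(1) b(1)] by blast
qed

lemma inI_minus: assumes "inI p m x" shows "inI p m (- x)"
proof -
  obtain a where a: "pint p a" "x = of_nat p ^ m * a" using assms inI_def by auto
  have "- x = of_nat p ^ m * (- a)" using a by simp
  thus ?thesis unfolding inI_def using pint_minus[OF a(1)] by blast
qed

lemma inI_diff: "prime p \<Longrightarrow> inI p m x \<Longrightarrow> inI p m y \<Longrightarrow> inI p m (x - y)"
  using inI_add[of p m x "-y"] inI_minus[of p m y] by simp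

lemma inI_zero[simp]: "prime p \<Longrightarrow> inI p m 0" unfolding inI_def by (rule exI[of _ 0]) simp

lemma inI_sum: "prime p \<Longrightarrow> (\<And>i. i \<in> A \<Longrightarrow> inI p m (f i)) \<Longrightarrow> inI p m (\<Sum>i\<in>A. f i)"
  by (induction A rule: infinite_finite_induct) (auto intro: inI_add)

lemma inI_mult: assumes "prime p" "inI p m x" "inI p n y" shows "inI p (m + n) (x * y)"
proof -
  obtain a where a: "pint p a" "x = of_nat p ^ m * a" using assms(2) inI_def by auto
  obtain b where b: "pint p b" "y = of_nat p ^ n * b" using assms(3) inI_def by auto
  have "x * y = of_nat p ^ (m + n) * (a * b)" using a b by (simp add: power_add mult_ac)
  thus ?thesis unfolding inI_def using pint_mult[OF assms(1) a(1) b(1)] by blast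
qed

lemma inI_mult_pint: "prime p \<Longrightarrow> pint p c \<Longrightarrow> inI p m x \<Longrightarrow> inI p m (c * x)"
  using inI_mult[of p 0 c m x] inI_0 by simp

lemma inI_mult_pint': "prime p \<Longrightarrow> pint p c \<Longrightarrow> inI p m x \<Longrightarrow> inI p m (x * c)"
  using inI_mult_pint[of p c m x] by (simp add: mult.commute)

lemma inI_mono: assumes "prime p" "n \<le> m" "inI p m x" shows "inI p n x"
proof -
  obtain y where y: "pint p y" "x = of_nat p ^ m * y" using assms inI_def by auto
  have "m = n + (m - n)" using assms(2) by simp
  hence "(of_nat p ^ m :: rat) = of_nat p ^ n * of_nat p ^ (m - n)" by (metis power_add)
  hence "x = of_nat p ^ n * (of_nat p ^ (m - n) * y)" using y by simp
  moreover have "pint p (of_nat p ^ (m - n) * y)"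
    using assms(1) y by (intro pint_mult pint_power) (auto simp: prime_gt_1_nat)
  ultimately show ?thesis unfolding inI_def by blast
qed

lemma inI_ppow: "prime p \<Longrightarrow> inI p m (of_nat p ^ m)" unfolding inI_def by (rule exI[of _ 1]) simp

lemma inI_pmult: assumes "inI p m x" shows "inI p (m + 1) (of_nat p * x)"
proof -
  obtain a where a: "pint p a" "x = of_nat p ^ m * a" using assms inI_def by auto
  have "of_nat p * x = of_nat p ^ (m + 1) * a" using a by simp
  thus ?thesis unfolding inI_def using a(1) by blast
qed

lemma inI_pmult_pow: "prime p \<Longrightarrow> inI p m x \<Longrightarrow> inI p (k + m) (of_nat p ^ k * x)"
  using inI_mult[OF _ inI_ppow] by blast

lemma inI_divp: assumes "prime p" "inI p (m + 1) (of_nat p * x)" shows "inI p m x"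
proof -
  obtain y where y: "pint p y" "of_nat p * x = of_nat p ^ (m+1) * y" using assms inI_def by auto
  have "p \<noteq> 0" using assms prime_gt_0_nat by auto
  hence "x = of_nat p ^ m * y" using y by (simp add: power_Suc)
  thus ?thesis using y inI_def by blast
qed

lemma inI_int: assumes "prime p" "int p ^ m dvd z" shows "inI p m (of_int z)"
proof -
  obtain w where "z = int p ^ m * w" using assms by blast
  thus ?thesis unfolding inI_def using assms(1) by (intro exI[of _ "of_int w"]) simp
qed

lemma inI_cong_final:
  assumes "prime p" "inI p m (a - b)" shows "rat_cong_pow a b p m"
proof -
  obtain y where y: "pint p y" "a - b = of_nat p ^ m * y" using assms inI_def by auto
  have "p \<noteq> 0" using assms prime_gt_0_nat by auto
  hence "(a - b) / of_nat p ^ m = y" using y by simp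
  thus ?thesis using pint_denom[OF assms(1) y(1)] unfolding rat_cong_pow_def by simp
qed



lemma bern_rec: "n > 0 \<Longrightarrow> (\<Sum>k\<le>n. of_nat (Suc n choose k) * bernoulli k) = 0"
proof -
  assume n: "n > 0"
  have "bernoulli n = - (\<Sum>k<n. of_nat ((n + 1) choose k) * bernoulli k) / of_nat (n + 1)"
    using n by (subst bernoulli.simps) simp
  hence "of_nat (n+1) * bernoulli n = - (\<Sum>k<n. of_nat ((n + 1) choose k) * bernoulli k)"
    by (simp add: field_simps)
  moreover have "(\<Sum>k\<le>n. of_nat (Suc n choose k) * bernoulli k)
      = (\<Sum>k<n. of_nat (Suc n choose k) * bernoulli k) + of_nat (n+1) * bernoulli n"
    by (simp add: lessThan_Suc_atMost[symmetric])
  ultimately show ?thesis by simp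
qed

lemma bern_rec': "(\<Sum>k\<le>n. of_nat (Suc n choose k) * bernoulli k) = (if n = 0 then 1 else 0)"
  using bern_rec[of n] by (cases "n = 0") (auto simp: bernoulli.simps)

lemma bern_int: "\<exists>z::int. of_nat (fact (Suc n)) * bernoulli n = of_int z"
proof (induction n rule: less_induct)
  case (less n)
  show ?case
  proof (cases "n = 0")
    case True thus ?thesis by (intro exI[of _ 1]) (simp add: bernoulli.simps)
  next
    case False
    have X: "of_nat (Suc n) * bernoulli n = - (\<Sum>k<n. of_nat ((n + 1) choose k) * bernoulli k)"
      using False by (subst bernoulli.simps) (simp add: field_simps del: of_nat_Suc)
    have "of_nat (fact (Suc n)) * bernoulli n = of_nat (fact n) * (of_nat (Suc n) * bernoulli n)"
      by (simp only: fact_Suc of_nat_mult of_nat_id mult_ac)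
    also have "\<dots> = - (\<Sum>k<n. of_nat ((n + 1) choose k) * (of_nat (fact n) * bernoulli k))"
      unfolding X by (simp add: sum_distrib_left mult_ac)
    also have "\<dots> = - (\<Sum>k<n. of_nat ((n + 1) choose k) * of_nat (fact n div fact (Suc k)) * (of_nat (fact (Suc k)) * bernoulli k))"
    proof -
      have "\<And>k. k < n \<Longrightarrow> (of_nat (fact n) :: rat) = of_nat (fact n div fact (Suc k)) * of_nat (fact (Suc k))"
      proof -
        fix k assume "k < n"
        hence "fact (Suc k) dvd (fact n :: nat)" by (intro fact_dvd) simp
        hence "fact n = (fact n div fact (Suc k)) * (fact (Suc k) :: nat)" by simp
        thus "(of_nat (fact n) :: rat) = of_nat (fact n div fact (Suc k)) * of_nat (fact (Suc k))"
          by (metis of_nat_mult)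
      qed
      thus ?thesis by (intro arg_cong[where f=uminus] sum.cong) (auto simp: mult_ac simp del: of_nat_fact)
    qed
    finally have eq: "of_nat (fact (Suc n)) * bernoulli n = \<dots>" .
    have "\<forall>k\<in>{..<n}. \<exists>z::int. of_nat ((n + 1) choose k) * of_nat (fact n div fact (Suc k)) * (of_nat (fact (Suc k)) * bernoulli k) = (of_int z :: rat)"
    proof
      fix k assume "k \<in> {..<n}"
      then obtain z where "of_nat (fact (Suc k)) * bernoulli k = of_int z" using less by auto
      thus "\<exists>z::int. of_nat ((n + 1) choose k) * of_nat (fact n div fact (Suc k)) * (of_nat (fact (Suc k)) * bernoulli k) = (of_int z :: rat)"
        by (intro exI[of _ "int ((n + 1) choose k) * int (fact n div fact (Suc k)) * z"]) simp
    qed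
    then obtain g where g: "\<forall>k\<in>{..<n}. of_nat ((n + 1) choose k) * of_nat (fact n div fact (Suc k)) * (of_nat (fact (Suc k)) * bernoulli k) = (of_int (g k) :: rat)"
      by metis
    show ?thesis using eq g by (intro exI[of _ "- (\<Sum>k<n. g k)"]) simp
  qed
qed

lemma bern_pint:
  assumes "prime p" "Suc n < p" shows "pint p (bernoulli n)"
proof -
  obtain z where z: "of_nat (fact (Suc n)) * bernoulli n = of_int z" using bern_int by blast
  have "\<not> p \<le> Suc n" using assms by simp
  hence nd: "\<not> p dvd fact (Suc n)" by (simp only: prime_dvd_fact_iff[OF assms(1)]) simp
  have nz: "(of_nat (fact (Suc n)) :: rat) \<noteq> 0" by (simp only: of_nat_eq_0_iff fact_nonzero) simp
  have "bernoulli n = of_int z / of_nat (fact (Suc n))"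
    by (metis z nonzero_mult_div_cancel_left nz)
  thus ?thesis using pint_div_nat[OF assms(1) pint_int[OF assms(1)] nd] by simp
qed



lemma choose_swap: "i + j \<le> n \<Longrightarrow> (n choose j) * ((n - j) choose i) = (n choose i) * ((n - i) choose j)"
proof -
  assume h: "i + j \<le> n"
  have "(n choose (i+j)) * ((i+j) choose j) = (n choose j) * ((n - j) choose i)"
    using choose_mult[of j "i+j" n] h by simp
  moreover have "(n choose (i+j)) * ((i+j) choose i) = (n choose i) * ((n - i) choose j)"
    using choose_mult[of i "i+j" n] h by simp
  moreover have "((i+j) choose j) = ((i+j) choose i)"
    using binomial_symmetric[of j "i+j"] by simp
  ultimately show ?thesis by simp
qed

lemma pow_diff_binom: "((x::rat) + 1) ^ r - x ^ r = (\<Sum>i<r. of_nat (r choose i) * x ^ i)"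
proof -
  have "(x + 1) ^ r = (\<Sum>i\<le>r. of_nat (r choose i) * x ^ i)"
    using binomial_ring[of x 1 r] by simp
  also have "\<dots> = (\<Sum>i<r. of_nat (r choose i) * x ^ i) + x ^ r"
    by (simp add: lessThan_Suc_atMost[symmetric])
  finally show ?thesis by simp
qed

lemma faulhaber_step:
  "(\<Sum>j\<le>m. of_nat (Suc m choose j) * bernoulli j * (((x::rat)+1) ^ (Suc m - j) - x ^ (Suc m - j)))
    = of_nat (Suc m) * x ^ m"
proof -
  have "(\<Sum>j\<le>m. of_nat (Suc m choose j) * bernoulli j * ((x+1) ^ (Suc m - j) - x ^ (Suc m - j)))
     = (\<Sum>j\<le>m. \<Sum>i\<le>m. (if i + j \<le> m then of_nat (Suc m choose j) * of_nat ((Suc m - j) choose i) * bernoulli j * x ^ i else 0))"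
  proof (rule sum.cong[OF refl])
    fix j assume j: "j \<in> {..m}"
    have "(x+1) ^ (Suc m - j) - x ^ (Suc m - j) = (\<Sum>i<Suc m - j. of_nat ((Suc m - j) choose i) * x ^ i)"
      by (rule pow_diff_binom)
    hence "of_nat (Suc m choose j) * bernoulli j * ((x+1) ^ (Suc m - j) - x ^ (Suc m - j))
        = (\<Sum>i<Suc m - j. of_nat (Suc m choose j) * of_nat ((Suc m - j) choose i) * bernoulli j * x ^ i)"
      by (simp add: sum_distrib_left mult_ac)
    also have "\<dots> = (\<Sum>i\<le>m. (if i + j \<le> m then of_nat (Suc m choose j) * of_nat ((Suc m - j) choose i) * bernoulli j * x ^ i else 0))"
    proof -
      have e: "{..<Suc m - j} = {i \<in> {..m}. i + j \<le> m}" using j by auto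
      show ?thesis unfolding e by (rule sum.inter_filter) simp
    qed
    finally show "of_nat (Suc m choose j) * bernoulli j * ((x+1) ^ (Suc m - j) - x ^ (Suc m - j)) = \<dots>" .
  qed
  also have "\<dots> = (\<Sum>i\<le>m. \<Sum>j\<le>m. (if i + j \<le> m then of_nat (Suc m choose j) * of_nat ((Suc m - j) choose i) * bernoulli j * x ^ i else 0))"
    by (rule sum.swap)
  also have "\<dots> = (\<Sum>i\<le>m. of_nat (Suc m choose i) * x ^ i * (\<Sum>j\<le>m - i. of_nat (Suc (m - i) choose j) * bernoulli j))"
  proof (rule sum.cong[OF refl])
    fix i assume i: "i \<in> {..m}"
    have "(\<Sum>j\<le>m. (if i + j \<le> m then of_nat (Suc m choose j) * of_nat ((Suc m - j) choose i) * bernoulli j * x ^ i else 0))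
        = (\<Sum>j\<le>m. (if i + j \<le> m then of_nat (Suc m choose i) * x ^ i * (of_nat (Suc (m - i) choose j) * bernoulli j) else 0))"
    proof (rule sum.cong[OF refl])
      fix j
      show "(if i + j \<le> m then of_nat (Suc m choose j) * of_nat ((Suc m - j) choose i) * bernoulli j * x ^ i else 0)
          = (if i + j \<le> m then of_nat (Suc m choose i) * x ^ i * (of_nat (Suc (m - i) choose j) * bernoulli j) else (0::rat))"
      proof (cases "i + j \<le> m")
        case True
        hence "(Suc m choose j) * ((Suc m - j) choose i) = (Suc m choose i) * ((Suc m - i) choose j)"
          by (intro choose_swap) simp
        hence "(of_nat (Suc m choose j) * of_nat ((Suc m - j) choose i) :: rat) = of_nat (Suc m choose i) * of_nat ((Suc m - i) choose j)"
          by (metis of_nat_mult)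
        moreover have "Suc m - i = Suc (m - i)" using True by simp
        ultimately show ?thesis using True by (simp add: mult_ac)
      qed simp
    qed
    also have "\<dots> = (\<Sum>j\<le>m - i. of_nat (Suc m choose i) * x ^ i * (of_nat (Suc (m - i) choose j) * bernoulli j))"
    proof -
      have e: "{..m - i} = {j \<in> {..m}. i + j \<le> m}" using i by auto
      show ?thesis unfolding e by (rule sum.inter_filter[symmetric]) simp
    qed
    finally show "(\<Sum>j\<le>m. (if i + j \<le> m then of_nat (Suc m choose j) * of_nat ((Suc m - j) choose i) * bernoulli j * x ^ i else 0))
        = of_nat (Suc m choose i) * x ^ i * (\<Sum>j\<le>m - i. of_nat (Suc (m - i) choose j) * bernoulli j)"
      by (simp add: sum_distrib_left)
  qed
  also have "\<dots> = (\<Sum>i\<le>m. if i = m then of_nat (Suc m choose i) * x ^ i else 0)"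
  proof (rule sum.cong[OF refl])
    fix i assume "i \<in> {..m}"
    thus "of_nat (Suc m choose i) * x ^ i * (\<Sum>j\<le>m - i. of_nat (Suc (m - i) choose j) * bernoulli j)
        = (if i = m then of_nat (Suc m choose i) * x ^ i else 0)"
      by (subst bern_rec') auto
  qed
  also have "\<dots> = of_nat (Suc m) * x ^ m" by simp
  finally show ?thesis .
qed

lemma faulhaber:
  "of_nat (Suc m) * (\<Sum>k<n. (of_nat k::rat) ^ m)
     = (\<Sum>j\<le>m. of_nat (Suc m choose j) * bernoulli j * of_nat n ^ (Suc m - j))"
proof (induction n)
  case 0
  have "(\<Sum>j\<le>m. of_nat (Suc m choose j) * bernoulli j * (of_nat 0 :: rat) ^ (Suc m - j)) = 0"
    by (rule sum.neutral) auto
  thus ?case by simp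
next
  case (Suc n)
  have "of_nat (Suc m) * (\<Sum>k<Suc n. (of_nat k::rat) ^ m)
      = of_nat (Suc m) * (\<Sum>k<n. (of_nat k::rat) ^ m) + of_nat (Suc m) * of_nat n ^ m"
    by (simp add: algebra_simps)
  also have "\<dots> = (\<Sum>j\<le>m. of_nat (Suc m choose j) * bernoulli j * of_nat n ^ (Suc m - j))
     + (\<Sum>j\<le>m. of_nat (Suc m choose j) * bernoulli j * ((of_nat n + 1) ^ (Suc m - j) - of_nat n ^ (Suc m - j)))"
    using Suc faulhaber_step[of m "of_nat n"] by simp
  also have "\<dots> = (\<Sum>j\<le>m. of_nat (Suc m choose j) * bernoulli j * of_nat (Suc n) ^ (Suc m - j))"
    by (simp add: sum.distrib[symmetric] algebra_simps)
  finally show ?case .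
qed



lemma sum_double:
  fixes p h :: nat and f :: "nat \<Rightarrow> 'a::comm_monoid_add"
  assumes h: "p = 2 * h + 1"
  shows "(\<Sum>j\<in>{1..p-1}. f j) = (\<Sum>k\<in>{1..h}. f (2*k)) + (\<Sum>k\<in>{h+1..p-1}. f (2*k-p))"
proof -
  have "(\<Sum>j\<in>{1..p-1}. f j) = (\<Sum>j\<in>{j\<in>{1..p-1}. even j}. f j) + (\<Sum>j\<in>{j\<in>{1..p-1}. odd j}. f j)"
  proof -
    have "{1..p-1} = {j\<in>{1..p-1}. even j} \<union> {j\<in>{1..p-1}. odd j}" by blast
    moreover have "{j\<in>{1..p-1}. even j} \<inter> {j\<in>{1..p-1}. odd j} = {}" by blast
    ultimately show ?thesis by (metis (no_types, lifting) finite_atLeastAtMost finite_Un sum.union_disjoint)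
  qed
  moreover have "(\<Sum>k\<in>{1..h}. f (2*k)) = (\<Sum>j\<in>{j\<in>{1..p-1}. even j}. f j)"
  proof (rule sum.reindex_bij_witness[where i="\<lambda>j. j div 2" and j="\<lambda>k. 2*k"])
    fix a assume "a \<in> {1..h}" thus "2 * a div 2 = a" by simp
  next
    fix a assume "a \<in> {1..h}" thus "2 * a \<in> {j\<in>{1..p-1}. even j}" using h by simp
  next
    fix b assume "b \<in> {j\<in>{1..p-1}. even j}" thus "2 * (b div 2) = b" by simp
  next
    fix b assume b: "b \<in> {j\<in>{1..p-1}. even j}"
    then obtain c where c: "b = 2 * c" by blast
    thus "b div 2 \<in> {1..h}" using b h by simp
  next
    fix a show "f (2 * a) = f (2 * a)" ..
  qed
  moreover have "(\<Sum>k\<in>{h+1..p-1}. f (2*k-p)) = (\<Sum>j\<in>{j\<in>{1..p-1}. odd j}. f j)"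
  proof (rule sum.reindex_bij_witness[where i="\<lambda>j. (j + p) div 2" and j="\<lambda>k. 2*k-p"])
    fix a assume "a \<in> {h+1..p-1}" thus "(2 * a - p + p) div 2 = a" using h by simp
  next
    fix a assume a: "a \<in> {h+1..p-1}"
    hence "2 * a - p = 2 * (a - h - 1) + 1" using h by (simp only: atLeastAtMost_iff) arith
    moreover have "2 * (a - h - 1) + 1 \<le> p - 1" using a h by (simp only: atLeastAtMost_iff) arith
    ultimately show "2 * a - p \<in> {j\<in>{1..p-1}. odd j}" by simp
  next
    fix b assume "b \<in> {j\<in>{1..p-1}. odd j}"
    then obtain c where c: "b = 2 * c + 1" by (blast elim: oddE)
    thus "2 * ((b + p) div 2) - p = b" using h by simp
  next
    fix b assume b: "b \<in> {j\<in>{1..p-1}. odd j}"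
    then obtain c where c: "b = 2 * c + 1" by (blast elim: oddE)
    thus "(b + p) div 2 \<in> {h+1..p-1}" using b h by simp
  next
    fix a show "f (2 * a - p) = f (2 * a - p)" ..
  qed
  ultimately show ?thesis by simp
qed

context
  fixes p :: nat
  assumes pr: "prime p" and p3: "p > 3"
begin

lemma p_odd: "odd p"
  using pr p3 prime_odd_nat by auto

lemma ndvd: assumes "k \<in> {1..p-1}" shows "\<not> p dvd k"
proof
  assume "p dvd k"
  hence "p \<le> k" using assms by (intro dvd_imp_le) auto
  thus False using assms p3 by auto
qed

lemma ndvd_pow: assumes "k \<in> {1..p-1}" shows "\<not> p dvd k ^ r"
proof
  assume "p dvd k ^ r"
  hence "p dvd k" by (rule prime_dvd_power[OF pr])
  thus False using ndvd[OF assms] by simp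
qed

lemma pint_invpow: "k \<in> {1..p-1} \<Longrightarrow> pint p (1 / of_nat k ^ r)"
  using pint_inv_nat[OF ndvd_pow, of k r] by simp

lemma fermat_I: assumes "\<not> p dvd k" shows "inI p 1 (of_nat k ^ (p-1) - 1)"
proof -
  have "[k ^ (p-1) = 1] (mod p)" using fermat_theorem[OF pr assms] .
  hence "[int (k ^ (p-1)) = int 1] (mod int p)" using cong_int_iff by blast
  hence "int p dvd int (k ^ (p-1)) - int 1" by (simp only: cong_iff_dvd_diff)
  hence "int p ^ 1 dvd int (k ^ (p-1)) - int 1" by simp
  hence "inI p 1 (of_int (int (k ^ (p-1)) - int 1))" by (rule inI_int[OF pr])
  moreover have "(of_int (int (k ^ (p-1)) - int 1) :: rat) = of_nat k ^ (p-1) - 1" by simp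
  ultimately show ?thesis by simp
qed

lemma sum_rev: "(\<Sum>k\<in>{1..p-1}. f k) = (\<Sum>k\<in>{1..p-1}. f (p - k))"
  by (rule sum.reindex_bij_witness[where i="\<lambda>k. p - k" and j="\<lambda>k. p - k"]) (auto simp: atLeastAtMost_iff)

end



lemma binom_I:
  assumes pr: "prime p" and a: "pint p a"
  shows "inI p 2 ((a - of_nat p) ^ Suc n - a ^ Suc n + of_nat (Suc n) * a ^ n * of_nat p)"
proof (induction n)
  case 0
  show ?case using pr by simp
next
  case (Suc n)
  have eq: "(a - of_nat p) ^ Suc (Suc n) - a ^ Suc (Suc n) + of_nat (Suc (Suc n)) * a ^ Suc n * of_nat p
     = (a - of_nat p) * ((a - of_nat p) ^ Suc n - a ^ Suc n + of_nat (Suc n) * a ^ n * of_nat p)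
       + of_nat p ^ 2 * (of_nat (Suc n) * a ^ n)"
    by (simp add: algebra_simps power2_eq_square)
  have "pint p (a - of_nat p)" using pr a by (intro pint_diff) auto
  hence "inI p 2 ((a - of_nat p) * ((a - of_nat p) ^ Suc n - a ^ Suc n + of_nat (Suc n) * a ^ n * of_nat p))"
    using Suc inI_mult_pint pr by blast
  moreover have "inI p 2 (of_nat p ^ 2 * (of_nat (Suc n) * a ^ n))"
  proof -
    have "pint p (of_nat (Suc n))" by (rule pint_nat[OF pr])
    hence "pint p (of_nat (Suc n) * a ^ n)" using pint_mult[OF pr _ pint_power[OF pr a]] by blast
    hence "inI p 0 (of_nat (Suc n) * a ^ n)" using inI_0 by blast
    from inI_pmult_pow[OF pr this, of 2] show ?thesis by simp
  qed
  ultimately show ?case unfolding eq using pr inI_add by blast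
qed

context
  fixes p :: nat
  assumes pr: "prime p" and p3: "p > 3"
begin

lemma S_cong: "inI p 2 ((\<Sum>k\<in>{1..p-1}. (of_nat k :: rat) ^ (p-3)) - of_nat p * bernoulli (p-3))"
proof -
  define m where "m = p - 3"
  have m: "p = m + 3" "m \<ge> 1" using p3 unfolding m_def by auto
  have e: "p - 3 = m" by (simp add: m_def)
  have S: "(\<Sum>k\<in>{1..p-1}. (of_nat k :: rat) ^ m) = (\<Sum>k<p. (of_nat k :: rat) ^ m)"
  proof -
    have i: "{..<p} = insert 0 {1..p-1}" using p3 by auto
    have "(\<Sum>k<p. (of_nat k :: rat) ^ m) = (of_nat 0 :: rat) ^ m + (\<Sum>k\<in>{1..p-1}. (of_nat k :: rat) ^ m)"
      unfolding i by (rule sum.insert) auto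
    also have "(of_nat 0 :: rat) ^ m = 0" using m(2) by simp
    finally show ?thesis by simp
  qed
  have F: "of_nat (Suc m) * (\<Sum>k<p. (of_nat k::rat) ^ m)
     = (\<Sum>j\<le>m. of_nat (Suc m choose j) * bernoulli j * of_nat p ^ (Suc m - j))"
    by (rule faulhaber)
  also have "\<dots> = (\<Sum>j<m. of_nat (Suc m choose j) * bernoulli j * of_nat p ^ (Suc m - j))
      + of_nat (Suc m) * bernoulli m * of_nat p"
    by (simp add: lessThan_Suc_atMost[symmetric])
  finally have F2: "of_nat (Suc m) * ((\<Sum>k<p. (of_nat k::rat) ^ m) - of_nat p * bernoulli m)
      = (\<Sum>j<m. of_nat (Suc m choose j) * bernoulli j * of_nat p ^ (Suc m - j))"
    by (simp add: algebra_simps)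
  have R: "inI p 2 (\<Sum>j<m. of_nat (Suc m choose j) * bernoulli j * of_nat p ^ (Suc m - j))"
  proof (rule inI_sum[OF pr])
    fix j assume j: "j \<in> {..<m}"
    have "pint p (of_nat (Suc m choose j) * bernoulli j * of_nat p ^ (Suc m - j - 2))"
      by (intro pint_mult pint_power pint_nat[OF pr] bern_pint[OF pr] pr) (use j m in auto)
    hence "inI p 0 (of_nat (Suc m choose j) * bernoulli j * of_nat p ^ (Suc m - j - 2))"
      using inI_0 by blast
    from inI_pmult_pow[OF pr this, of 2]
    have a: "inI p 2 (of_nat p ^ 2 * (of_nat (Suc m choose j) * bernoulli j * of_nat p ^ (Suc m - j - 2)))"
      by simp
    have b: "of_nat p ^ 2 * (of_nat (Suc m choose j) * bernoulli j * of_nat p ^ (Suc m - j - 2))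
        = (of_nat (Suc m choose j) * bernoulli j * of_nat p ^ (Suc m - j) :: rat)"
    proof -
      have "Suc m - j = 2 + (Suc m - j - 2)" using j by simp
      hence "(of_nat p ^ (Suc m - j) :: rat) = of_nat p ^ 2 * of_nat p ^ (Suc m - j - 2)"
        by (metis power_add)
      thus ?thesis by simp
    qed
    show "inI p 2 (of_nat (Suc m choose j) * bernoulli j * of_nat p ^ (Suc m - j))"
      using a unfolding b .
  qed
  have nd: "\<not> p dvd Suc m"
  proof
    assume "p dvd Suc m"
    hence "p \<le> Suc m" by (rule dvd_imp_le) simp
    thus False using m by simp
  qed
  have "inI p 2 ((1 / of_nat (Suc m)) * (of_nat (Suc m) * ((\<Sum>k<p. (of_nat k::rat) ^ m) - of_nat p * bernoulli m)))"
    using F2 R inI_mult_pint[OF pr pint_inv_nat[OF nd]] by simp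
  moreover have "(1 / of_nat (Suc m)) * (of_nat (Suc m) * ((\<Sum>k<p. (of_nat k::rat) ^ m) - of_nat p * bernoulli m))
     = (\<Sum>k<p. (of_nat k::rat) ^ m) - of_nat p * bernoulli m" by (simp del: of_nat_Suc)
  ultimately show ?thesis unfolding e S by simp
qed

end



lemma aux_lin:
  fixes S A B C t W :: rat
  assumes h1: "S = A + C" and h2: "A + B = t * S"
  shows "(t - 1) * S - W = - (C - (B - W))"
proof -
  have "(t - 1) * S = t * S - S" by (simp add: left_diff_distrib)
  thus ?thesis using h1 h2 by linarith
qed

context
  fixes p :: nat
  assumes pr: "prime p" and p3: "p > 3"
begin

lemma U_cong: "inI p 1 ((\<Sum>k\<in>{(p-1) div 2 + 1..p-1}. (of_nat k :: rat) ^ (p-4)) - 2 * bernoulli (p-3))"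
proof -
  define h where "h = (p-1) div 2"
  have h: "p = 2 * h + 1" using p_odd[OF pr p3] unfolding h_def by presburger
  define n where "n = p - 4"
  have n: "p = n + 4" using p3 unfolding n_def by auto
  define S where "S = (\<Sum>k\<in>{1..p-1}. (of_nat k :: rat) ^ Suc n)"
  define U where "U = (\<Sum>k\<in>{h+1..p-1}. (of_nat k :: rat) ^ n)"
  define B where "B = bernoulli (p-3)"
  have pp: "p - 3 = Suc n" "p - 4 = n" using n by auto
  have SB: "inI p 2 (S - of_nat p * B)" using S_cong[OF pr p3] unfolding S_def B_def pp .
  have split: "\<And>f. (\<Sum>k\<in>{1..p-1}. f k) = (\<Sum>k\<in>{1..h}. f k) + (\<Sum>k\<in>{h+1..p-1}. f k :: rat)"
    by (subst sum.union_disjoint[symmetric]) (auto intro!: sum.cong simp: h)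
  have dbl: "S = (\<Sum>k\<in>{1..h}. (2 * of_nat k) ^ Suc n) + (\<Sum>k\<in>{h+1..p-1}. (2 * of_nat k - of_nat p) ^ Suc n)"
  proof -
    have "S = (\<Sum>k\<in>{1..h}. (of_nat (2*k) :: rat) ^ Suc n) + (\<Sum>k\<in>{h+1..p-1}. (of_nat (2*k-p)) ^ Suc n)"
      unfolding S_def by (rule sum_double[OF h])
    moreover have "(\<Sum>k\<in>{h+1..p-1}. (of_nat (2*k-p) :: rat) ^ Suc n) = (\<Sum>k\<in>{h+1..p-1}. (2 * of_nat k - of_nat p) ^ Suc n)"
      by (intro sum.cong refl) (auto simp: h of_nat_diff)
    ultimately show ?thesis by simp
  qed
  have up: "inI p 2 ((\<Sum>k\<in>{h+1..p-1}. (2 * of_nat k - of_nat p) ^ Suc n)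
        - ((\<Sum>k\<in>{h+1..p-1}. (2 * of_nat k) ^ Suc n) - of_nat (Suc n) * 2 ^ n * of_nat p * U))"
  proof -
    have "inI p 2 (\<Sum>k\<in>{h+1..p-1}. ((2 * of_nat k - of_nat p) ^ Suc n - (2 * of_nat k) ^ Suc n
             + of_nat (Suc n) * (2 * of_nat k) ^ n * of_nat p))"
      by (intro inI_sum binom_I pr pint_mult[OF pr] pint_numeral[OF pr] pint_nat[OF pr])
    moreover have "(\<Sum>k\<in>{h+1..p-1}. ((2 * of_nat k - of_nat p) ^ Suc n - (2 * of_nat k) ^ Suc n
             + of_nat (Suc n) * (2 * of_nat k) ^ n * of_nat p))
       = (\<Sum>k\<in>{h+1..p-1}. (2 * of_nat k - of_nat p) ^ Suc n)
        - ((\<Sum>k\<in>{h+1..p-1}. (2 * of_nat k) ^ Suc n) - of_nat (Suc n) * 2 ^ n * of_nat p * U)"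
      unfolding U_def by (simp add: sum.distrib sum_subtractf sum_distrib_left power_mult_distrib algebra_simps)
    ultimately show ?thesis by simp
  qed
  have all: "(\<Sum>k\<in>{1..h}. (2 * of_nat k) ^ Suc n) + (\<Sum>k\<in>{h+1..p-1}. (2 * of_nat k) ^ Suc n) = (2::rat) ^ Suc n * S"
  proof -
    have "(2::rat)^Suc n * S = (\<Sum>k\<in>{1..p-1}. (2 * of_nat k)^Suc n)"
      unfolding S_def sum_distrib_left by (intro sum.cong refl) (simp add: power_mult_distrib)
    also have "\<dots> = (\<Sum>k\<in>{1..h}. (2 * of_nat k)^Suc n) + (\<Sum>k\<in>{h+1..p-1}. (2 * of_nat k)^Suc n)"
      by (rule split)
    finally show ?thesis by simp
  qed
  have E1: "inI p 2 (((2::rat) ^ Suc n - 1) * S - of_nat (Suc n) * 2 ^ n * of_nat p * U)"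
  proof -
    have "inI p 2 (-((\<Sum>k\<in>{h+1..p-1}. (2 * of_nat k - of_nat p) ^ Suc n)
        - ((\<Sum>k\<in>{h+1..p-1}. (2 * of_nat k) ^ Suc n) - of_nat (Suc n) * 2 ^ n * of_nat p * U)))"
      using up inI_minus by blast
    moreover have eqq: "((2::rat) ^ Suc n - 1) * S - of_nat (Suc n) * 2 ^ n * of_nat p * U
      = -((\<Sum>k\<in>{h+1..p-1}. (2 * of_nat k - of_nat p) ^ Suc n)
        - ((\<Sum>k\<in>{h+1..p-1}. (2 * of_nat k) ^ Suc n) - of_nat (Suc n) * 2 ^ n * of_nat p * U))"
      by (rule aux_lin[OF dbl all])
    ultimately show ?thesis by (simp only: eqq)
  qed
  have E1': "inI p 2 (((2::rat) ^ Suc n - 1) * (S - of_nat p * B))"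
    by (intro inI_mult_pint[OF pr] SB pint_diff[OF pr] pint_power[OF pr] pint_numeral[OF pr] pint_1[OF pr])
  have "inI p 2 (((2::rat) ^ Suc n - 1) * S - of_nat (Suc n) * 2 ^ n * of_nat p * U - ((2::rat) ^ Suc n - 1) * (S - of_nat p * B))"
    using inI_diff[OF pr E1 E1'] .
  hence h2: "inI p 2 (of_nat p * (((2::rat) ^ Suc n - 1) * B - of_nat (Suc n) * 2 ^ n * U))"
    by (simp add: algebra_simps)
  have E2: "inI p 1 (((2::rat) ^ Suc n - 1) * B - of_nat (Suc n) * 2 ^ n * U)"
    using inI_divp[OF pr, of 1] h2 unfolding one_add_one by blast
  have Fm: "inI p 1 ((2::rat) ^ (n+3) - 1)"
  proof -
    have "\<not> p dvd 2"
    proof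
      assume "p dvd 2"
      hence "p \<le> 2" by (rule dvd_imp_le) simp
      thus False using p3 by simp
    qed
    have "p - 1 = n + 3" using n by simp
    with fermat_I[OF pr p3 \<open>\<not> p dvd 2\<close>] show ?thesis by simp
  qed
  define F where "F = (2::rat) ^ (n+3) - 1"
  have key: "3 * U - 6 * B = 8 * (((2::rat) ^ Suc n - 1) * B - of_nat (Suc n) * 2 ^ n * U)
      - F * (2 * B - of_nat (Suc n) * U) + of_nat p * U"
    unfolding F_def using n by (simp add: algebra_simps power_add)
  have pB: "pint p B" unfolding B_def using bern_pint[OF pr] p3 by simp
  have pU: "pint p U" unfolding U_def using pr by (intro pint_sum pint_power) auto
  have "inI p 1 (3 * U - 6 * B)"
  proof -
    have a: "inI p 1 (8 * (((2::rat) ^ Suc n - 1) * B - of_nat (Suc n) * 2 ^ n * U))"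
      by (rule inI_mult_pint[OF pr pint_numeral[OF pr] E2])
    have b: "inI p 1 (F * (2 * B - of_nat (Suc n) * U))"
      unfolding F_def
      by (rule inI_mult_pint'[OF pr _ Fm], intro pint_diff[OF pr] pint_mult[OF pr] pint_numeral[OF pr] pint_nat[OF pr] pB pU)
    have c0: "inI p 0 U" using inI_0 pU by blast
    have c: "inI p 1 (of_nat p * U)"
      using inI_pmult[OF c0] by simp
    show ?thesis unfolding key by (intro inI_add[OF pr] inI_diff[OF pr] a b c)
  qed
  hence "inI p 1 (1/3 * (3 * U - 6 * B))" by (intro inI_mult_pint[OF pr] pint_inv_num) (use p3 in auto)
  hence "inI p 1 (U - 2 * B)" by (simp add: algebra_simps)
  thus ?thesis unfolding U_def B_def h_def pp .
qed

end



definition harm :: "nat \<Rightarrow> nat \<Rightarrow> rat" where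
  "harm p r = (\<Sum>k\<in>{1..p-1}. 1 / of_nat k ^ r)"

lemma lin1: fixes H q T R B Us :: rat
  assumes "H = H/4 + q*T/4 + q^2*R"
  shows "H - 2/3*q*B = 4/3*(q^2*R) + 1/3*(q*(T - Us)) + 1/3*(q*(Us - 2*B))"
  using assms by (simp add: field_simps)

lemma id2a: fixes x q :: rat assumes "x \<noteq> 0" "2*x - q \<noteq> 0"
  shows "1/(2*x-q)^2 = 1/4*(1/x^2) + q/4*(1/x^3) + q^2*((3*x-q)/4*(1/x^3)*(1/(2*x-q)^2))"
  using assms by (simp add: field_simps) (simp add: algebra_simps power2_eq_square power3_eq_cube numeral_eq_Suc)

lemma id3a: fixes x q :: rat assumes "x \<noteq> 0" "q - x \<noteq> 0"
  shows "1/x^3 + 1/(q-x)^3 = q * ((q^2 - 3*q*x + 3*x^2) * (1/x^3) * (1/(q-x)^3))"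
  using assms by (simp add: field_simps) (simp add: algebra_simps power2_eq_square power3_eq_cube numeral_eq_Suc)

lemma id1a: fixes x q :: rat assumes "x \<noteq> 0" "q - x \<noteq> 0"
  shows "1/x + 1/(q-x) = - q * (1/x^2) - q^2 * (1/x^3) + q^3 * ((1/x^3) * (1/(q-x)))"
  using assms by (simp add: field_simps) (simp add: algebra_simps power2_eq_square power3_eq_cube numeral_eq_Suc)
lemma id2: fixes x y q :: rat assumes "x \<noteq> 0" "y \<noteq> 0" "y = 2*x - q"
  shows "1/y^2 = 1/4*(1/x^2) + q/4*(1/x^3) + q^2*((3*x-q)/4*(1/x^3)*(1/y^2))"
proof -
  have "2*x - q \<noteq> 0" using assms by simp
  thus ?thesis unfolding assms(3) using id2a assms(1) by blast
qed

lemma id3: fixes x y q :: rat assumes "x \<noteq> 0" "y \<noteq> 0" "y = q - x"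
  shows "1/x^3 + 1/y^3 = q * ((q^2 - 3*q*x + 3*x^2) * (1/x^3) * (1/y^3))"
proof -
  have "q - x \<noteq> 0" using assms by simp
  thus ?thesis unfolding assms(3) using id3a assms(1) by blast
qed

lemma id1: fixes x y q :: rat assumes "x \<noteq> 0" "y \<noteq> 0" "y = q - x"
  shows "1/x + 1/y = - q * (1/x^2) - q^2 * (1/x^3) + q^3 * ((1/x^3) * (1/y))"
proof -
  have "q - x \<noteq> 0" using assms by simp
  thus ?thesis unfolding assms(3) using id1a assms(1) by blast
qed

context
  fixes p :: nat
  assumes pr: "prime p" and p3: "p > 3"
begin

lemmas pI = pint_add[OF pr] pint_diff[OF pr] pint_mult[OF pr] pint_power[OF pr] pint_nat[OF pr]
  pint_numeral[OF pr] pint_1[OF pr] pint_minus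

lemma mem_rev: "k \<in> {1..p-1} \<Longrightarrow> p - k \<in> {1..p-1}" by auto

lemma pint_inv1: "k \<in> {1..p-1} \<Longrightarrow> pint p (1 / of_nat k)"
  using pint_invpow[OF pr p3, of k 1] by simp

lemma harm_rev: "2 * harm p r = (\<Sum>k\<in>{1..p-1}. 1 / of_nat k ^ r + 1 / of_nat (p - k) ^ r)"
proof -
  have "harm p r = (\<Sum>k\<in>{1..p-1}. 1 / of_nat (p - k) ^ r)"
    unfolding harm_def by (rule sum_rev[OF pr p3])
  hence "2 * harm p r = harm p r + (\<Sum>k\<in>{1..p-1}. 1 / of_nat (p - k) ^ r)" by simp
  thus ?thesis unfolding harm_def by (simp add: sum.distrib)
qed

lemma H3: "inI p 1 (harm p 3)"
proof -
  have "inI p 1 (\<Sum>k\<in>{1..p-1}. 1 / of_nat k ^ 3 + 1 / of_nat (p - k) ^ 3)"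
  proof (rule inI_sum[OF pr])
    fix k assume k: "k \<in> {1..p-1}"
    have e: "1 / of_nat k ^ 3 + 1 / of_nat (p - k) ^ 3
      = of_nat p * ((of_nat p ^ 2 - 3 * of_nat p * of_nat k + 3 * of_nat k ^ 2) * (1 / of_nat k ^ 3) * (1 / of_nat (p - k) ^ 3) :: rat)"
      by (rule id3) (use k in \<open>auto simp: of_nat_diff\<close>)
    have "pint p ((of_nat p ^ 2 - 3 * of_nat p * of_nat k + 3 * of_nat k ^ 2) * (1 / of_nat k ^ 3) * (1 / of_nat (p - k) ^ 3))"
      by (intro pI pint_invpow[OF pr p3] k mem_rev)
    hence "inI p 0 \<dots>" using inI_0 by blast
    from inI_pmult[OF this] show "inI p 1 (1 / of_nat k ^ 3 + 1 / of_nat (p - k) ^ 3)" unfolding e by simp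
  qed
  hence "inI p 1 (1/2 * (2 * harm p 3))" unfolding harm_rev
    by (intro inI_mult_pint[OF pr] pint_inv_num) (use p3 in auto)
  thus ?thesis by simp
qed

lemma H1: "inI p 3 (harm p 1 + of_nat p / 2 * harm p 2)"
proof -
  define R where "R = (\<Sum>k\<in>{1..p-1}. (1 / of_nat k ^ 3) * (1 / of_nat (p - k)) :: rat)"
  have "2 * harm p 1 = (\<Sum>k\<in>{1..p-1}. - of_nat p * (1 / of_nat k ^ 2) - of_nat p ^ 2 * (1 / of_nat k ^ 3)
        + of_nat p ^ 3 * ((1 / of_nat k ^ 3) * (1 / of_nat (p - k))))"
    unfolding harm_rev
  proof (rule sum.cong[OF refl])
    fix k assume k: "k \<in> {1..p-1}"
    show "1 / of_nat k ^ 1 + 1 / of_nat (p - k) ^ 1 = - of_nat p * (1 / of_nat k ^ 2) - of_nat p ^ 2 * (1 / of_nat k ^ 3)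
        + of_nat p ^ 3 * ((1 / of_nat k ^ 3) * (1 / of_nat (p - k)) :: rat)"
    proof -
      have nz: "of_nat k \<noteq> (0::rat)" "of_nat (p-k) \<noteq> (0::rat)" "of_nat (p-k) = (of_nat p - of_nat k :: rat)"
        using k by (auto simp: of_nat_diff)
      show ?thesis using id1[OF nz] by simp
    qed
  qed
  also have "\<dots> = - of_nat p * harm p 2 - of_nat p ^ 2 * harm p 3 + of_nat p ^ 3 * R"
    unfolding harm_def R_def by (simp add: sum.distrib sum_subtractf sum_distrib_left sum_negf)
  finally have eq: "harm p 1 + of_nat p / 2 * harm p 2 = 1/2 * (of_nat p ^ 3 * R - of_nat p ^ 2 * harm p 3)"
    by (simp add: field_simps)
  have pR: "pint p R" unfolding R_def
    by (intro pint_sum[OF pr] pI pint_invpow[OF pr p3] pint_inv1 mem_rev) auto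
  have a: "inI p 3 (of_nat p ^ 3 * R)"
    using inI_pmult_pow[OF pr, of 0 R 3] inI_0 pR by simp
  have b: "inI p 3 (of_nat p ^ 2 * harm p 3)"
    using inI_pmult_pow[OF pr H3, of 2] by simp
  show ?thesis unfolding eq
    by (intro inI_mult_pint[OF pr] pint_inv_num inI_diff[OF pr] a b) (use p3 in auto)
qed

end



lemma inI_mult_eq: "prime p \<Longrightarrow> inI p m x \<Longrightarrow> inI p n y \<Longrightarrow> m + n = k \<Longrightarrow> inI p k (x * y)"
  using inI_mult by blast

lemma inI_ppow_eq: "prime p \<Longrightarrow> inI p m x \<Longrightarrow> j + m = k \<Longrightarrow> inI p k (of_nat p ^ j * x)"
  using inI_pmult_pow by blast

lemma inI_ppow0: "prime p \<Longrightarrow> pint p x \<Longrightarrow> inI p j (of_nat p ^ j * x)"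
  using inI_pmult_pow[of p 0 x j] inI_0 by simp

lemma inI_p1: "prime p \<Longrightarrow> inI p m x \<Longrightarrow> Suc m = k \<Longrightarrow> inI p k (of_nat p * x)"
  using inI_pmult[of p m x] by simp

lemma pint_div_num: "prime p \<Longrightarrow> pint p x \<Longrightarrow> numeral k < p \<Longrightarrow> pint p (x / numeral k)"
  using pint_mult[of p x "1 / numeral k"] pint_inv_num[of k p] by simp

context
  fixes p :: nat
  assumes pr: "prime p" and p3: "p > 3"
begin

lemma p5: "4 < p"
proof -
  have "p \<noteq> 4" using p_odd[OF pr p3] by auto
  thus ?thesis using p3 by simp
qed

lemma T_cong: "inI p 1 ((\<Sum>k\<in>{(p-1) div 2 + 1..p-1}. 1 / (of_nat k :: rat) ^ 3) - (\<Sum>k\<in>{(p-1) div 2 + 1..p-1}. (of_nat k :: rat) ^ (p-4)))"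
proof -
  have "inI p 1 (\<Sum>k\<in>{(p-1) div 2 + 1..p-1}. 1 / (of_nat k :: rat) ^ 3 - of_nat k ^ (p-4))"
  proof (rule inI_sum[OF pr])
    fix k assume k: "k \<in> {(p-1) div 2 + 1..p-1}"
    hence k1: "k \<in> {1..p-1}" by auto
    have nd: "\<not> p dvd k" using ndvd[OF pr p3 k1] .
    have kz: "(of_nat k :: rat) \<noteq> 0" using k1 by auto
    have pp: "p - 1 = (p - 4) + 3" using p3 by simp
    have e: "1 / (of_nat k :: rat) ^ 3 - of_nat k ^ (p-4) = - ((of_nat k ^ (p-1) - 1) * (1 / of_nat k ^ 3))"
      using kz unfolding pp by (simp add: field_simps power_add)
    have "inI p 1 ((of_nat k ^ (p-1) - 1) * (1 / of_nat k ^ 3))"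
      by (rule inI_mult_pint'[OF pr pint_invpow[OF pr p3 k1] fermat_I[OF pr p3 nd]])
    thus "inI p 1 (1 / (of_nat k :: rat) ^ 3 - of_nat k ^ (p-4))" unfolding e by (rule inI_minus)
  qed
  thus ?thesis by (simp add: sum_subtractf)
qed

lemma H2: "inI p 2 (harm p 2 - 2/3 * of_nat p * bernoulli (p-3))"
proof -
  define h where "h = (p-1) div 2"
  have hp: "p = 2 * h + 1" using p_odd[OF pr p3] unfolding h_def by presburger
  define q where "q = (of_nat p :: rat)"
  define T where "T = (\<Sum>k\<in>{h+1..p-1}. 1 / (of_nat k :: rat) ^ 3)"
  define Us where "Us = (\<Sum>k\<in>{h+1..p-1}. (of_nat k :: rat) ^ (p-4))"
  define B where "B = bernoulli (p-3)"
  define R where "R = (\<Sum>k\<in>{h+1..p-1}. (3 * of_nat k - q) / 4 * (1 / of_nat k ^ 3) * (1 / of_nat (2*k-p) ^ 2))"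
  have split: "\<And>f. (\<Sum>k\<in>{1..p-1}. f k) = (\<Sum>k\<in>{1..h}. f k) + (\<Sum>k\<in>{h+1..p-1}. f k :: rat)"
    by (subst sum.union_disjoint[symmetric]) (auto intro!: sum.cong simp: hp)
  have dbl: "harm p 2 = (\<Sum>k\<in>{1..h}. 1 / (of_nat (2*k)) ^ 2) + (\<Sum>k\<in>{h+1..p-1}. 1 / (of_nat (2*k-p)) ^ 2)"
    unfolding harm_def by (rule sum_double[OF hp])
  have low: "(\<Sum>k\<in>{1..h}. 1 / (of_nat (2*k) :: rat) ^ 2) = 1/4 * (\<Sum>k\<in>{1..h}. 1 / of_nat k ^ 2)"
    by (simp add: sum_distrib_left power_mult_distrib)
  have up: "(\<Sum>k\<in>{h+1..p-1}. 1 / (of_nat (2*k-p) :: rat) ^ 2)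
      = 1/4 * (\<Sum>k\<in>{h+1..p-1}. 1 / of_nat k ^ 2) + q/4 * T + q^2 * R"
  proof -
    have "(\<Sum>k\<in>{h+1..p-1}. 1 / (of_nat (2*k-p) :: rat) ^ 2)
      = (\<Sum>k\<in>{h+1..p-1}. 1/4*(1/of_nat k^2) + q/4*(1/of_nat k^3) + q^2*((3*of_nat k-q)/4*(1/of_nat k^3)*(1/of_nat (2*k-p)^2)))"
    proof (rule sum.cong[OF refl])
      fix k assume k: "k \<in> {h+1..p-1}"
      have nz: "(of_nat k :: rat) \<noteq> 0" "(of_nat (2*k-p) :: rat) \<noteq> 0" "(of_nat (2*k-p) :: rat) = 2 * of_nat k - q"
        using k hp unfolding q_def by (auto simp: of_nat_diff)
      show "1 / (of_nat (2*k-p) :: rat) ^ 2 = 1/4*(1/of_nat k^2) + q/4*(1/of_nat k^3) + q^2*((3*of_nat k-q)/4*(1/of_nat k^3)*(1/of_nat (2*k-p)^2))"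
        by (rule id2[OF nz])
    qed
    also have "\<dots> = 1/4 * (\<Sum>k\<in>{h+1..p-1}. 1 / of_nat k ^ 2) + q/4 * T + q^2 * R"
      unfolding T_def R_def by (simp add: sum.distrib sum_distrib_left)
    finally show ?thesis .
  qed
  have E: "harm p 2 = harm p 2 / 4 + q * T / 4 + q^2 * R"
  proof -
    have "harm p 2 = (\<Sum>k\<in>{1..h}. 1 / of_nat k ^ 2) + (\<Sum>k\<in>{h+1..p-1}. 1 / of_nat k ^ 2)"
      unfolding harm_def by (rule split)
    thus ?thesis using dbl low up by (simp add: field_simps)
  qed
  have L: "harm p 2 - 2/3*q*B = 4/3*(q^2*R) + 1/3*(q*(T - Us)) + 1/3*(q*(Us - 2*B))"
    by (rule lin1[OF E])
  have pR: "pint p R" unfolding R_def q_def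
  proof (intro pint_sum[OF pr] pint_div_num[OF pr] pI[OF pr p3] pint_invpow[OF pr p3] pint_inv_num)
    fix k assume k: "k \<in> {h+1..p-1}"
    show "k \<in> {1..p-1}" using k by auto
    show "2*k-p \<in> {1..p-1}" using k hp by auto
  qed (use p3 p5 in auto)
  have a: "inI p 2 (4/3*(q^2*R))" unfolding q_def
    by (rule inI_mult_pint[OF pr pint_div_num[OF pr pint_numeral[OF pr]] inI_ppow0[OF pr pR]]) (use p3 in simp)
  have TU: "inI p 1 (T - Us)" unfolding T_def Us_def h_def using T_cong .
  have UB: "inI p 1 (Us - 2*B)" unfolding Us_def B_def h_def using U_cong[OF pr p3] .
  have b: "inI p 2 (1/3*(q*(T - Us)))" unfolding q_def
    by (intro inI_mult_pint[OF pr] pint_inv_num inI_p1[OF pr TU]) (use p3 in auto)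
  have c: "inI p 2 (1/3*(q*(Us - 2*B)))" unfolding q_def
    by (intro inI_mult_pint[OF pr] pint_inv_num inI_p1[OF pr UB]) (use p3 in auto)
  have "inI p 2 (harm p 2 - 2/3*q*B)" unfolding L by (intro inI_add[OF pr] a b c)
  thus ?thesis unfolding q_def B_def .
qed

end



lemma alg1: fixes X E s1 s2 s3 q B :: rat
  assumes "E = 1 + s1 + (s1^2 - s2)/2 + (s1^3 - 3*s1*s2 + 2*s3)/6"
  shows "X - (1 - 7/12*q^3*B) = (X - E) + s1^2/2 + (s1^3 - 3*s1*s2 + 2*s3)/6 + (s1 - s2/2 + 7/12*q^3*B)"
  using assms by (simp add: field_simps)

lemma alg2: fixes s1 s2 H1 H2 H3 H4 q B :: rat
  assumes "s1 = -5/2*q*H1 + q^2*H2" "s2 = 25/4*q^2*H2 - 5*q^3*H3 + q^4*H4"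
  shows "s1 - s2/2 + 7/12*q^3*B = -5/2*(q*(H1 + q/2*H2)) - 7/8*(q^2*(H2 - 2/3*q*B)) + 5/2*(q^3*H3) - 1/2*(q^4*H4)"
  using assms by (simp add: field_simps) (simp add: algebra_simps power2_eq_square power3_eq_cube numeral_eq_Suc)

lemma alg3: fixes s1 H1 H2 q :: rat
  assumes "s1 = -5/2*q*H1 + q^2*H2"
  shows "s1 = -5/2*(q*(H1 + q/2*H2)) + 9/4*(q^2*H2)"
  using assms by (simp add: field_simps) (simp add: algebra_simps power2_eq_square)

lemma alg_step: fixes c P E s1 s2 s3 :: rat
  shows "(1 + c) * P - (1 + (c + s1) + ((c + s1)^2 - (c^2 + s2))/2 + ((c + s1)^3 - 3*(c + s1)*(c^2 + s2) + 2*(c^3 + s3))/6)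
    = (1 + c) * (P - (1 + s1 + (s1^2 - s2)/2 + (s1^3 - 3*s1*s2 + 2*s3)/6)) + c * ((s1^3 - 3*s1*s2 + 2*s3)/6)"
  by (simp add: field_simps) (simp add: algebra_simps power2_eq_square power3_eq_cube numeral_eq_Suc)

lemma fac: fixes x q :: rat assumes "x \<noteq> 0"
  shows "(q/2 - x) * (2*q - x) / x^2 = 1 + (-5/2*q*(1/x) + q^2*(1/x^2))"
  using assms by (simp add: field_simps) (simp add: algebra_simps power2_eq_square power3_eq_cube numeral_eq_Suc)

lemma c2: fixes x q :: rat
  shows "(-5/2*q*(1/x) + q^2*(1/x^2))^2 = 25/4*q^2*(1/x^2) - 5*q^3*(1/x^3) + q^4*(1/x^4)"
  by (simp add: field_simps) (simp add: algebra_simps power2_eq_square power3_eq_cube numeral_eq_Suc)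

lemma c3: fixes x q :: rat
  shows "(-5/2*q*(1/x) + q^2*(1/x^2))^3 = -125/8*q^3*(1/x^3) + q^4*(75/4*(1/x^4) - 15/2*q*(1/x^5) + q^2*(1/x^6))"
  by (simp add: field_simps) (simp add: algebra_simps power2_eq_square power3_eq_cube numeral_eq_Suc)

lemma prod_shift: "(\<Prod>k\<in>{1..n}. f k) = (\<Prod>i\<in>{0..<n}. f (Suc i) :: rat)"
  by (rule prod.reindex_bij_witness[where i="\<lambda>i. Suc i" and j="\<lambda>k. k - 1"]) auto

lemma pint_inv6: "prime p \<Longrightarrow> 3 < p \<Longrightarrow> pint p (1/6)"
  using pint_mult[of p "1/2" "1/3"] pint_inv_small[of 2 p] pint_inv_small[of 3 p] by simp

context
  fixes p :: nat
  assumes pr: "prime p" and p3: "p > 3"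
begin

lemma prod_exp:
  assumes "finite A" "\<And>k. k \<in> A \<Longrightarrow> inI p 1 (c k)"
  shows "inI p 4 ((\<Prod>k\<in>A. 1 + c k) - (1 + (\<Sum>k\<in>A. c k) + ((\<Sum>k\<in>A. c k)^2 - (\<Sum>k\<in>A. c k^2))/2
     + ((\<Sum>k\<in>A. c k)^3 - 3*(\<Sum>k\<in>A. c k)*(\<Sum>k\<in>A. c k^2) + 2*(\<Sum>k\<in>A. c k^3))/6))"
  using assms
proof (induction A rule: finite_induct)
  case empty
  show ?case using pr by simp
next
  case (insert a A)
  define s1 where "s1 = (\<Sum>k\<in>A. c k)"
  define s2 where "s2 = (\<Sum>k\<in>A. c k^2)"
  define s3 where "s3 = (\<Sum>k\<in>A. c k^3)"
  define P where "P = (\<Prod>k\<in>A. 1 + c k)"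
  have IH: "inI p 4 (P - (1 + s1 + (s1^2 - s2)/2 + (s1^3 - 3*s1*s2 + 2*s3)/6))"
    unfolding P_def s1_def s2_def s3_def using insert by blast
  have ca: "inI p 1 (c a)" using insert by blast
  have cA: "\<And>k. k \<in> A \<Longrightarrow> inI p 1 (c k)" using insert by blast
  have i1: "inI p 1 s1" unfolding s1_def by (intro inI_sum[OF pr] cA)
  have i2: "inI p 2 s2" unfolding s2_def power2_eq_square
  proof (rule inI_sum[OF pr])
    fix k assume k: "k \<in> A"
    show "inI p 2 (c k * c k)" by (rule inI_mult_eq[OF pr cA[OF k] cA[OF k]]) simp
  qed
  have i3: "inI p 3 s3" unfolding s3_def power3_eq_cube
  proof (rule inI_sum[OF pr])
    fix k assume k: "k \<in> A"
    show "inI p 3 (c k * c k * c k)" by (rule inI_mult_eq[OF pr inI_mult_eq[OF pr cA[OF k] cA[OF k] refl] cA[OF k]]) simp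
  qed
  have s13: "inI p 3 (s1^3)" unfolding power3_eq_cube
    by (rule inI_mult_eq[OF pr inI_mult_eq[OF pr i1 i1 refl] i1]) simp
  have s12: "inI p 3 (3*s1*s2)" unfolding mult.assoc
    by (rule inI_mult_pint[OF pr pint_numeral[OF pr] inI_mult_eq[OF pr i1 i2]]) simp
  have N: "inI p 3 (s1^3 - 3*s1*s2 + 2*s3)"
    by (intro inI_add[OF pr] inI_diff[OF pr] s13 s12 inI_mult_pint[OF pr pint_numeral[OF pr]] i3)
  have e3: "inI p 3 ((s1^3 - 3*s1*s2 + 2*s3)/6)"
    using inI_mult_pint'[OF pr pint_inv6[OF pr p3] N] by simp
  have t2: "inI p 4 (c a * ((s1^3 - 3*s1*s2 + 2*s3)/6))"
    by (rule inI_mult_eq[OF pr ca e3]) simp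
  have pa: "pint p (1 + c a)"
  proof -
    have "inI p 0 (c a)" using inI_mono[OF pr _ ca] by simp
    thus ?thesis using pint_add[OF pr pint_1[OF pr]] inI_0 by blast
  qed
  have t1: "inI p 4 ((1 + c a) * (P - (1 + s1 + (s1^2 - s2)/2 + (s1^3 - 3*s1*s2 + 2*s3)/6)))"
    by (rule inI_mult_pint[OF pr pa IH])
  have "(\<Prod>k\<in>insert a A. 1 + c k) - (1 + (\<Sum>k\<in>insert a A. c k) + ((\<Sum>k\<in>insert a A. c k)^2 - (\<Sum>k\<in>insert a A. c k^2))/2
     + ((\<Sum>k\<in>insert a A. c k)^3 - 3*(\<Sum>k\<in>insert a A. c k)*(\<Sum>k\<in>insert a A. c k^2) + 2*(\<Sum>k\<in>insert a A. c k^3))/6)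
     = (1 + c a) * P - (1 + (c a + s1) + ((c a + s1)^2 - (c a^2 + s2))/2 + ((c a + s1)^3 - 3*(c a + s1)*(c a^2 + s2) + 2*(c a^3 + s3))/6)"
    unfolding P_def s1_def s2_def s3_def using insert(1,2) by simp
  also have "\<dots> = (1 + c a) * (P - (1 + s1 + (s1^2 - s2)/2 + (s1^3 - 3*s1*s2 + 2*s3)/6)) + c a * ((s1^3 - 3*s1*s2 + 2*s3)/6)"
    by (rule alg_step)
  finally show ?case using inI_add[OF pr t1 t2] by simp
qed

end



lemma nd_pow2: assumes "prime p" "p > 3" shows "\<not> p dvd (2::nat) ^ k"
proof
  assume "p dvd 2 ^ k"
  hence "p dvd 2" by (rule prime_dvd_power[OF assms(1)])
  hence "p \<le> 2" by (rule dvd_imp_le) simp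
  thus False using assms by simp
qed

lemma pint_frac2: assumes "prime p" "p > 3" shows "pint p (of_nat a / 2 ^ k)"
proof -
  have "pint p (of_nat a / of_nat (2 ^ k))"
    by (rule pint_div_nat[OF assms(1) pint_nat[OF assms(1)] nd_pow2[OF assms]])
  thus ?thesis by simp
qed

lemma pint_52: "prime p \<Longrightarrow> p > 3 \<Longrightarrow> pint p (5/2)" using pint_frac2[of p 5 1] by simp
lemma pint_94: "prime p \<Longrightarrow> p > 3 \<Longrightarrow> pint p (9/4)" using pint_frac2[of p 9 2] by simp
lemma pint_78: "prime p \<Longrightarrow> p > 3 \<Longrightarrow> pint p (7/8)" using pint_frac2[of p 7 3] by simp
lemma pint_1258: "prime p \<Longrightarrow> p > 3 \<Longrightarrow> pint p (125/8)" using pint_frac2[of p 125 3] by simp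
lemma pint_m52: "prime p \<Longrightarrow> p > 3 \<Longrightarrow> pint p (-5/2)" using pint_minus[OF pint_52[of p]] by simp
lemma pint_m1258: "prime p \<Longrightarrow> p > 3 \<Longrightarrow> pint p (-125/8)" using pint_minus[OF pint_1258[of p]] by simp
lemma pint_12: "prime p \<Longrightarrow> p > 3 \<Longrightarrow> pint p (1/2)" using pint_frac2[of p 1 1] by simp

theorem mainTheorem14:
  fixes p :: nat
  assumes "prime p" and "p > 3"
  shows "rat_cong_pow
           (((of_nat p / 2 - 1 :: rat) gchoose (p - 1)) * of_nat ((2 * p - 1) choose (p - 1)))
           (1 - 7 / 12 * (of_nat p) ^ 3 * bernoulli (p - 3)) p 4"
proof -
  note pr = assms(1) and p3 = assms(2)
  define q where "q = (of_nat p :: rat)"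
  define B where "B = bernoulli (p - 3)"
  define c where "c = (\<lambda>k::nat. -5/2*q*(1/of_nat k) + q^2*(1/of_nat k^2))"
  define X where "X = ((q / 2 - 1 :: rat) gchoose (p - 1)) * of_nat ((2 * p - 1) choose (p - 1))"
  define A where "A = {1..p-1}"
  define s1 where "s1 = (\<Sum>k\<in>A. c k)"
  define s2 where "s2 = (\<Sum>k\<in>A. c k^2)"
  define s3 where "s3 = (\<Sum>k\<in>A. c k^3)"
  define E where "E = 1 + s1 + (s1^2 - s2)/2 + (s1^3 - 3*s1*s2 + 2*s3)/6"
  define W where "W = (\<Sum>k\<in>A. 75/4*(1/of_nat k^4) - 15/2*q*(1/of_nat k^5) + q^2*(1/of_nat k^6) :: rat)"
  have F0: "(fact (p-1) :: rat) = (\<Prod>k\<in>A. of_nat k)" unfolding A_def by (simp add: fact_prod)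
  have Fnz: "(fact (p-1) :: rat) \<noteq> 0" by simp
  have gch: "(q/2 - 1) gchoose (p-1) = (\<Prod>k\<in>A. q/2 - of_nat k) / fact (p-1)"
  proof -
    have "fact (p-1) * ((q/2 - 1) gchoose (p-1)) = (\<Prod>i=0..<p-1. (q/2 - 1) - of_nat i)"
      by (rule gbinomial_mult_fact)
    also have "\<dots> = (\<Prod>k\<in>A. q/2 - of_nat k)"
      unfolding A_def prod_shift by (intro prod.cong refl) (simp add: algebra_simps)
    finally show ?thesis using Fnz by (simp add: field_simps)
  qed
  have ch: "(of_nat ((2 * p - 1) choose (p - 1)) :: rat) = (\<Prod>k\<in>A. 2*q - of_nat k) / fact (p-1)"
  proof -
    have "(of_nat ((2 * p - 1) choose (p - 1)) :: rat) = of_nat (2 * p - 1) gchoose (p - 1)"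
      by (rule binomial_gbinomial)
    also have "(of_nat (2 * p - 1) :: rat) = 2 * q - 1" using p3 unfolding q_def by (simp add: of_nat_diff)
    finally have e: "(of_nat ((2 * p - 1) choose (p - 1)) :: rat) = (2 * q - 1) gchoose (p - 1)" .
    have "fact (p-1) * ((2 * q - 1) gchoose (p-1)) = (\<Prod>i=0..<p-1. (2 * q - 1) - of_nat i)"
      by (rule gbinomial_mult_fact)
    also have "\<dots> = (\<Prod>k\<in>A. 2 * q - of_nat k)"
      unfolding A_def prod_shift by (intro prod.cong refl) (simp add: algebra_simps)
    finally show ?thesis unfolding e using Fnz by (simp add: field_simps)
  qed
  have Xprod: "X = (\<Prod>k\<in>A. 1 + c k)"
  proof -
    have "(\<Prod>k\<in>A. 1 + c k) = (\<Prod>k\<in>A. (q/2 - of_nat k) * (2*q - of_nat k) / of_nat k ^ 2)"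
    proof (rule prod.cong[OF refl])
      fix k assume "k \<in> A"
      hence "(of_nat k :: rat) \<noteq> 0" unfolding A_def by auto
      thus "1 + c k = (q/2 - of_nat k) * (2*q - of_nat k) / of_nat k ^ 2"
        unfolding c_def using fac by simp
    qed
    also have "\<dots> = (\<Prod>k\<in>A. q/2 - of_nat k) * (\<Prod>k\<in>A. 2*q - of_nat k) / (\<Prod>k\<in>A. of_nat k) ^ 2"
      by (simp add: prod.distrib prod_dividef prod_power_distrib)
    also have "\<dots> = X" unfolding X_def gch ch F0 by (simp add: power2_eq_square)
    finally show ?thesis by simp
  qed
  have cI: "\<And>k. k \<in> A \<Longrightarrow> inI p 1 (c k)"
  proof -
    fix k assume k: "k \<in> A"
    have e: "c k = of_nat p * (-5/2*(1/of_nat k) + of_nat p*(1/of_nat k^2))"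
      unfolding c_def q_def by (simp add: algebra_simps power2_eq_square)
    have "pint p (-5/2*(1/of_nat k) + of_nat p*(1/of_nat k^2))"
      using k unfolding A_def
      by (intro pint_add[OF pr] pint_mult[OF pr] pint_m52[OF pr p3] pint_nat[OF pr]
          pint_inv1[OF pr p3] pint_invpow[OF pr p3])
    hence "inI p 0 (-5/2*(1/of_nat k) + of_nat p*(1/of_nat k^2))" using inI_0 by blast
    thus "inI p 1 (c k)" unfolding e by (rule inI_p1[OF pr]) simp
  qed
  have XE: "inI p 4 (X - E)"
    unfolding Xprod E_def s1_def s2_def s3_def
    by (rule prod_exp[OF pr p3]) (use cI in \<open>auto simp: A_def\<close>)
  have s1e: "s1 = -5/2*q*harm p 1 + q^2*harm p 2"
    by (simp only: s1_def c_def A_def harm_def sum.distrib mult.assoc sum_distrib_left[symmetric] power_one_right)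
  have s2e: "s2 = 25/4*q^2*harm p 2 - 5*q^3*harm p 3 + q^4*harm p 4"
    unfolding s2_def c_def harm_def A_def c2 by (simp add: sum.distrib sum_subtractf sum_distrib_left)
  have s3e: "s3 = -125/8*(q^3*harm p 3) + q^4*W"
    unfolding s3_def c_def c3 by (simp only: sum.distrib mult.assoc sum_distrib_left[symmetric] A_def harm_def W_def)
  have H1I: "inI p 3 (harm p 1 + q/2*harm p 2)" unfolding q_def by (rule H1[OF pr p3])
  have H2I: "inI p 2 (harm p 2 - 2/3*q*B)" unfolding q_def B_def by (rule H2[OF pr p3])
  have H3I: "inI p 1 (harm p 3)" by (rule H3[OF pr p3])
  have pB: "pint p B" unfolding B_def using bern_pint[OF pr] p3 by simp
  have H2in: "inI p 1 (harm p 2)"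
  proof -
    have a: "inI p 1 (harm p 2 - 2/3*q*B)" using inI_mono[OF pr _ H2I] by simp
    have "inI p 0 (2/3*B)" using inI_0 pint_mult[OF pr pint_div_num[OF pr pint_numeral[OF pr]] pB] p3 by simp
    hence b: "inI p 1 (q * (2/3*B))" unfolding q_def by (rule inI_p1[OF pr]) simp
    have "harm p 2 = (harm p 2 - 2/3*q*B) + q * (2/3*B)" by simp
    thus ?thesis using inI_add[OF pr a b] by simp
  qed
  have pH4: "pint p (harm p 4)" unfolding harm_def
    by (intro pint_sum[OF pr] pint_invpow[OF pr p3])
  have pW: "pint p W" unfolding W_def A_def q_def
    by (intro pint_sum[OF pr] pint_add[OF pr] pint_diff[OF pr] pint_mult[OF pr] pint_invpow[OF pr p3] pint_power[OF pr]
        pint_div_num[OF pr pint_numeral[OF pr]] pint_nat[OF pr]) (use p3 p5[OF pr p3] in auto)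
  have qI: "\<And>m x. inI p m x \<Longrightarrow> inI p (Suc m) (q * x)" unfolding q_def using inI_p1[OF pr] by blast
  have qpow: "\<And>j m x. inI p m x \<Longrightarrow> inI p (j + m) (q ^ j * x)" unfolding q_def using inI_pmult_pow[OF pr] by blast
  have s1I: "inI p 3 s1"
  proof -
    have a: "inI p 3 (-5/2*(q*(harm p 1 + q/2*harm p 2)))"
      using inI_mult_pint[OF pr pint_m52[OF pr p3] inI_mono[OF pr _ qI[OF H1I]]] by simp
    have b: "inI p 3 (9/4*(q^2*harm p 2))"
      using inI_mult_pint[OF pr pint_94[OF pr p3] qpow[OF H2in, of 2]] by simp
    show ?thesis unfolding alg3[OF s1e] using inI_add[OF pr a b] .
  qed
  have s2I: "inI p 2 s2" unfolding s2_def power2_eq_square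
  proof (rule inI_sum[OF pr])
    fix k assume k: "k \<in> A"
    show "inI p 2 (c k * c k)" by (rule inI_mult_eq[OF pr cI[OF k] cI[OF k]]) simp
  qed
  have s3I: "inI p 4 s3"
  proof -
    have a: "inI p 4 (-125/8*(q^3*harm p 3))"
      using inI_mult_pint[OF pr pint_m1258[OF pr p3] qpow[OF H3I, of 3]] by simp
    have "inI p 0 W" using inI_0 pW by blast
    hence b: "inI p 4 (q^4*W)" using qpow[of 0 W 4] by simp
    show ?thesis unfolding s3e using inI_add[OF pr a b] .
  qed
  have t1: "inI p 4 (s1^2/2)"
  proof -
    have a6: "inI p 6 (s1 * s1)" by (rule inI_mult_eq[OF pr s1I s1I]) simp
    have "inI p 4 (s1 * s1)" by (rule inI_mono[OF pr _ a6]) simp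
    hence "inI p 4 (s1 * s1 * (1/2))" by (rule inI_mult_pint'[OF pr pint_12[OF pr p3]])
    thus ?thesis by (simp add: power2_eq_square)
  qed
  have t2: "inI p 4 ((s1^3 - 3*s1*s2 + 2*s3)/6)"
  proof -
    have a9: "inI p 9 (s1 * s1 * s1)" by (rule inI_mult_eq[OF pr inI_mult_eq[OF pr s1I s1I refl] s1I]) simp
    have a: "inI p 4 (s1^3)" using inI_mono[OF pr _ a9, of 4] by (simp add: power3_eq_cube)
    have b5: "inI p 5 (s1 * s2)" by (rule inI_mult_eq[OF pr s1I s2I]) simp
    have b: "inI p 4 (3*s1*s2)" using inI_mult_pint[OF pr pint_numeral[OF pr] inI_mono[OF pr _ b5, of 4]]
      by (simp add: mult.assoc)
    have c: "inI p 4 (2*s3)" using inI_mult_pint[OF pr pint_numeral[OF pr] s3I] .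
    have "inI p 4 (s1^3 - 3*s1*s2 + 2*s3)" by (intro inI_add[OF pr] inI_diff[OF pr] a b c)
    from inI_mult_pint'[OF pr pint_inv6[OF pr p3] this] show ?thesis by simp
  qed
  have t3: "inI p 4 (-5/2*(q*(harm p 1 + q/2*harm p 2)) - 7/8*(q^2*(harm p 2 - 2/3*q*B)) + 5/2*(q^3*harm p 3) - 1/2*(q^4*harm p 4))"
  proof -
    have a: "inI p 4 (-5/2*(q*(harm p 1 + q/2*harm p 2)))"
      using inI_mult_pint[OF pr pint_m52[OF pr p3] qI[OF H1I]] by simp
    have b: "inI p 4 (7/8*(q^2*(harm p 2 - 2/3*q*B)))"
      using inI_mult_pint[OF pr pint_78[OF pr p3] qpow[OF H2I, of 2]] by simp
    have c: "inI p 4 (5/2*(q^3*harm p 3))"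
      using inI_mult_pint[OF pr pint_52[OF pr p3] qpow[OF H3I, of 3]] by simp
    have "inI p 0 (harm p 4)" using inI_0 pH4 by blast
    hence d: "inI p 4 (1/2*(q^4*harm p 4))"
      using inI_mult_pint[OF pr pint_12[OF pr p3] qpow[of 0 "harm p 4" 4]] by simp
    show ?thesis by (intro inI_add[OF pr] inI_diff[OF pr] a b c d)
  qed
  have main: "inI p 4 (X - (1 - 7/12*q^3*B))"
  proof -
    have "X - (1 - 7/12*q^3*B) = (X - E) + s1^2/2 + (s1^3 - 3*s1*s2 + 2*s3)/6 + (s1 - s2/2 + 7/12*q^3*B)"
      by (rule alg1) (simp add: E_def)
    also have "s1 - s2/2 + 7/12*q^3*B = -5/2*(q*(harm p 1 + q/2*harm p 2)) - 7/8*(q^2*(harm p 2 - 2/3*q*B)) + 5/2*(q^3*harm p 3) - 1/2*(q^4*harm p 4)"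
      by (rule alg2[OF s1e s2e])
    finally have eq: "X - (1 - 7/12*q^3*B) = (X - E) + s1^2/2 + (s1^3 - 3*s1*s2 + 2*s3)/6 + (-5/2*(q*(harm p 1 + q/2*harm p 2)) - 7/8*(q^2*(harm p 2 - 2/3*q*B)) + 5/2*(q^3*harm p 3) - 1/2*(q^4*harm p 4))" .
    show ?thesis unfolding eq by (intro inI_add[OF pr] XE t1 t2 t3)
  qed
  show ?thesis using inI_cong_final[OF pr main] unfolding X_def q_def B_def .
qed


end
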